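(* Let $Y$ be a relation variable of type $\{(\mathtt n,\mathtt n)\}$ and $U$ a function variable of type $\emptyset\to\mathtt n$. Then there are an arithmetical $\mathsf{FO{+}C}$-formula $\mathrm{s\text{-}itadd}$ and an arithmetical $\mathsf{FO{+}C}$-term $\mathrm{bd\text{-}s\text{-}itadd}$ (both possibly using $Y$ and $U$) such that for all numerical assignments $\mathfrak a$, $$\Big\langle \mathrm{s\text{-}itadd},\mathrm{bd\text{-}s\text{-}itadd}\Big\rangle^{\mathfrak a}=\sum_{i<\mathfrak a(U)}\langle Y,U\rangle^{\mathfrak a}(i).$$
   Context: $\mathsf{FO{+}C}$ is two-sorted first-order logic with counting: vertex variables range over the universe of a finite structure, number variables over $\mathbb N$. Terms: number variables, $0$, $1$, $\theta+\theta'$, $\theta\cdot\theta'$, terms $U(\xi_1,\dots,\xi_k)$ for function variables $U$, and counting terms $\#(x_1,\dots,x_k,y_1<\theta_1,\dots,y_\ell<\theta_\ell).\varphi$ (value: the number of tuples $(a_1..a_k,b_1..b_\ell)$, $a_i$ vertices, $b_i\in\mathbb N$, with each $b_i$ below the value of $\theta_i$ under the assignment extended by $x\mapsto a$, $y_1..y_{i-1}\mapsto b_1..b_{i-1}$, satisfying $\varphi$ under the assignment extended by all of them). Formulas: $\theta\le\theta'$, $x=x'$, relational atoms, atoms $X(\xi_1,\dots,\xi_k)$ for relation variables $X$, $\neg$, $\wedge$. Relation and function variables have types: a relation variable of type $\{(t_1,\dots,t_k)\}$ ($t_i\in\{\mathtt v,\mathtt n\}$) is interpreted by a subset of the corresponding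 product of universe/$\mathbb N$; a function variable of type $(t_1..t_k)\to\mathtt n$ by a function from that product to $\mathbb N$; in atoms $X(\xi_1..\xi_k)$ and terms $U(\xi_1..\xi_k)$, $\xi_i$ is a vertex variable if $t_i=\mathtt v$ and a term if $t_i=\mathtt n$. There is no quantification over relation/function variables. An expression is arithmetical if it contains no vertex variables; its value then depends only on a numerical assignment $\mathfrak a$ (values of number variables and of relation/function variables of purely numerical type). For a $0$-ary function variable write $\mathfrak a(U)$ for its value. Notation: $\langle Y,U\rangle^{\mathfrak a}(i)=\sum\{2^j: (j,i)\in\mathfrak a(Y),\ j<\mathfrak a(U)\}$. For a fixed distinguished number variable $\hat y$, a formula $\chi$ and a term $\theta$, $\langle\chi,\theta\rangle^{\mathfrak a}=\sum\{2^i: i<\text{value of }\theta\text{ under }\mathfrak a,\ \chi\text{ holds under }\mathfrak a\text{ modified to }\hat y\mapsto i\}$. *)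

theory Defs
  imports Main
begin

text \<open>Deep embedding of arithmetical FO+C expressions (no vertex variables) whose only
relation/function variables are Y of type {(n,n)} and the 0-ary function variable U.\<close>

datatype aterm =
    NVar nat
  | Zero
  | One
  | Plus aterm aterm
  | Times aterm aterm
  | UTerm
  | Count "(nat \<times> aterm) list" aform
and aform =
    Le aterm aterm
  | YAtom aterm aterm
  | Neg aform
  | Conj aform aform

text \<open>A counting term
#(y1<t1,...,yl<tl).phi counts tuples (b1..bl) with bi below the value of ti under the
assignment extended by y1..y(i-1) := b1..b(i-1), satisfying phi.\<close>

function (sequential) evalt :: "(nat \<Rightarrow> nat) \<Rightarrow> (nat \<Rightarrow> nat \<Rightarrow> bool) \<Rightarrow> nat \<Rightarrow> aterm \<Rightarrow> nat"
and holds :: "(nat \<Rightarrow> nat) \<Rightarrow> (nat \<Rightarrow> nat \<Rightarrow> bool) \<Rightarrow> nat \<Rightarrow> aform \<Rightarrow> bool"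
and cnt :: "(nat \<Rightarrow> nat) \<Rightarrow> (nat \<Rightarrow> nat \<Rightarrow> bool) \<Rightarrow> nat \<Rightarrow> (nat \<times> aterm) list \<Rightarrow> aform \<Rightarrow> nat"
where
  "evalt nv Y u (NVar x) = nv x"
| "evalt nv Y u Zero = 0"
| "evalt nv Y u One = 1"
| "evalt nv Y u (Plus s t) = evalt nv Y u s + evalt nv Y u t"
| "evalt nv Y u (Times s t) = evalt nv Y u s * evalt nv Y u t"
| "evalt nv Y u UTerm = u"
| "evalt nv Y u (Count ys \<phi>) = cnt nv Y u ys \<phi>"
| "holds nv Y u (Le s t) = (evalt nv Y u s \<le> evalt nv Y u t)"
| "holds nv Y u (YAtom s t) = Y (evalt nv Y u s) (evalt nv Y u t)"
| "holds nv Y u (Neg \<phi>) = (\<not> holds nv Y u \<phi>)"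
| "holds nv Y u (Conj \<phi> \<psi>) = (holds nv Y u \<phi> \<and> holds nv Y u \<psi>)"
| "cnt nv Y u [] \<phi> = (if holds nv Y u \<phi> then 1 else 0)"
| "cnt nv Y u ((y, t) # ys) \<phi> = (\<Sum>b < evalt nv Y u t. cnt (nv(y := b)) Y u ys \<phi>)"
  by pat_completeness auto
termination by size_change

definition yhat :: nat where "yhat = 0"

definition bitval :: "(nat \<Rightarrow> nat) \<Rightarrow> (nat \<Rightarrow> nat \<Rightarrow> bool) \<Rightarrow> nat \<Rightarrow> aform \<Rightarrow> aterm \<Rightarrow> nat" where
  "bitval nv Y u \<chi> \<theta> = (\<Sum>i | i < evalt nv Y u \<theta> \<and> holds (nv(yhat := i)) Y u \<chi>. 2 ^ i)"

text \<open>\<langle>Y,U\<rangle>^a(i), with (j,i) in Y read as Y j i.\<close>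
definition YU :: "(nat \<Rightarrow> nat \<Rightarrow> bool) \<Rightarrow> nat \<Rightarrow> nat \<Rightarrow> nat" where
  "YU Y u i = (\<Sum>j | Y j i \<and> j < u. 2 ^ j)"

end

theory Submission
  imports Defs
begin


definition "Lt s t = Neg (Le t s)"
definition "Eq s t = Conj (Le s t) (Le t s)"
definition "Or a b = Neg (Conj (Neg a) (Neg b))"
definition "Imp a b = Neg (Conj a (Neg b))"
definition "ExB x t \<phi> = Le One (Count [(x,t)] \<phi>)"
definition "AllB x t \<phi> = Neg (ExB x t (Neg \<phi>))"
definition "Two = Plus One One"

lemma sum_ind_ge1: "(1 \<le> (\<Sum>b<(n::nat). if P b then 1 else 0::nat)) \<longleftrightarrow> (\<exists>b<n. P b)"
  by (induct n) (auto simp: less_Suc_eq)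

lemma sum_ind_ge1': "(Suc 0 \<le> (\<Sum>b<(n::nat). if P b then 1 else 0::nat)) \<longleftrightarrow> (\<exists>b<n. P b)"
  using sum_ind_ge1 by simp

lemma odd_dvd_pow2: "odd (d::nat) \<Longrightarrow> d*e = 2^i \<Longrightarrow> d = 1"
proof (induction i arbitrary: e)
  case 0 then show ?case by simp
next
  case (Suc i)
  then have "even (d*e)" by simp
  have "even (d*e)" using Suc.prems(2) by simp
  then have "even e" using Suc.prems(1) by (simp add: even_mult_iff)
  then obtain e' where "e = 2*e'" by blast
  with Suc.prems have "d*e' = 2^i" by simp
  with Suc show ?case by blast
qed

lemma holds_basic[simp]:
  "holds nv Y u (Lt s t) \<longleftrightarrow> evalt nv Y u s < evalt nv Y u t"
  "holds nv Y u (Eq s t) \<longleftrightarrow> evalt nv Y u s = evalt nv Y u t"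
  "holds nv Y u (Or a b) \<longleftrightarrow> holds nv Y u a \<or> holds nv Y u b"
  "holds nv Y u (Imp a b) \<longleftrightarrow> (holds nv Y u a \<longrightarrow> holds nv Y u b)"
  "holds nv Y u (ExB x t \<phi>) \<longleftrightarrow> (\<exists>b<evalt nv Y u t. holds (nv(x:=b)) Y u \<phi>)"
  "holds nv Y u (AllB x t \<phi>) \<longleftrightarrow> (\<forall>b<evalt nv Y u t. holds (nv(x:=b)) Y u \<phi>)"
  "evalt nv Y u Two = 2"
  by (auto simp: Lt_def Eq_def Or_def Imp_def ExB_def AllB_def Two_def sum_ind_ge1 sum_ind_ge1')

definition is_pow2 :: "nat \<Rightarrow> bool" where "is_pow2 n = (\<exists>i. n = 2^i)"

lemma pow2_char: "(1 \<le> n \<and> (\<forall>d<n+1. \<forall>e<n+1. d*e = n \<and> 2 \<le> d \<longrightarrow> (\<exists>h<d. h+h = d))) \<longleftrightarrow> is_pow2 n"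
proof
  assume "is_pow2 n"
  then obtain i where n: "n = 2^i" by (auto simp: is_pow2_def)
  have "\<exists>h<d. h+h = d" if "d*e = n" "2 \<le> d" for d e
  proof -
    have "even d" using odd_dvd_pow2[of d e i] that n by auto
    then show ?thesis using \<open>2 \<le> d\<close> by (auto intro!: exI[of _ "d div 2"])
  qed
  then show "1 \<le> n \<and> (\<forall>d<n+1. \<forall>e<n+1. d*e = n \<and> 2 \<le> d \<longrightarrow> (\<exists>h<d. h+h = d))"
    using n by auto
next
  show "1 \<le> n \<and> (\<forall>d<n+1. \<forall>e<n+1. d*e = n \<and> 2 \<le> d \<longrightarrow> (\<exists>h<d. h+h = d)) \<Longrightarrow> is_pow2 n"
  proof (induction n rule: less_induct)
    case (less n)
    show ?case
    proof (cases "n = 1")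
      case True then show ?thesis by (auto simp: is_pow2_def intro: exI[of _ 0])
    next
      case False
      with less.prems have n2: "2 \<le> n" by auto
      have all: "\<forall>d<n+1. \<forall>e<n+1. d*e = n \<and> 2 \<le> d \<longrightarrow> (\<exists>h<d. h+h = d)" using less.prems by blast
      from all[rule_format, of n 1] n2 obtain h where h: "h + h = n" by auto
      have "1 \<le> h" using h n2 by auto
      have "\<forall>d<h+1. \<forall>e<h+1. d*e = h \<and> 2 \<le> d \<longrightarrow> (\<exists>g<d. g+g = d)"
      proof (intro allI impI)
        fix d e assume a: "d < h+1" "e < h+1" "d*e = h \<and> 2 \<le> d"
        then have "d * (2*e) = n" "2*e < n+1" "d < n+1" using h by auto
        then show "\<exists>g<d. g+g = d" using all a by blast
      qed
      with less.IH[of h] h \<open>1 \<le> h\<close> have "is_pow2 h" by auto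
      then obtain i where "h = 2^i" by (auto simp: is_pow2_def)
      then show ?thesis using h by (auto simp: is_pow2_def intro!: exI[of _ "Suc i"])
    qed
  qed
qed

definition "pow2F x c = Conj (Le One (NVar x)) (AllB c (Plus (NVar x) One) (AllB (c+1) (Plus (NVar x) One)
   (Imp (Conj (Eq (Times (NVar c) (NVar (c+1))) (NVar x)) (Le Two (NVar c)))
        (ExB (c+2) (NVar c) (Eq (Plus (NVar (c+2)) (NVar (c+2))) (NVar c))))))"

lemma holds_pow2F_raw: "x \<noteq> c \<Longrightarrow> x \<noteq> c+1 \<Longrightarrow> x \<noteq> c+2 \<Longrightarrow> holds nv Y u (pow2F x c) \<longleftrightarrow>
  (1 \<le> nv x \<and> (\<forall>d<nv x+1. \<forall>e<nv x+1. d*e = nv x \<and> 2 \<le> d \<longrightarrow> (\<exists>h<d. h+h = d)))"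
  unfolding pow2F_def
  by simp

lemma holds_pow2F[simp]: "x \<noteq> c \<Longrightarrow> x \<noteq> c+1 \<Longrightarrow> x \<noteq> c+2 \<Longrightarrow> holds nv Y u (pow2F x c) \<longleftrightarrow> is_pow2 (nv x)"
  using holds_pow2F_raw pow2_char by simp

lemma neq_off[simp]: "(x::nat) < c \<Longrightarrow> x \<noteq> c + k" "(x::nat) < c \<Longrightarrow> x \<noteq> c"
  by auto

lemma sum_ind_card: "(\<Sum>b<(n::nat). if P b then 1 else 0::nat) = card {b. b < n \<and> P b}"
proof -
  have "{b. b < n \<and> P b} = {b\<in>{..<n}. P b}" by auto
  then show ?thesis by (simp add: sum.inter_filter[symmetric])
qed

lemma card_pow2_below: "card {q. q < 2^i \<and> is_pow2 q} = i"
proof -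
  have "{q. q < 2^i \<and> is_pow2 q} = (\<lambda>j. 2^j) ` {..<i}"
    by (auto simp: is_pow2_def)
  moreover have "inj_on (\<lambda>j::nat. (2::nat)^j) {..<i}" by (auto simp: inj_on_def)
  ultimately show ?thesis by (simp add: card_image)
qed

lemma isPow_char: "(is_pow2 p \<and> card {q. q < p \<and> is_pow2 q} = r) \<longleftrightarrow> p = 2^r"
  using card_pow2_below by (auto simp: is_pow2_def)

definition "isPowF p r c = Conj (pow2F p c) (Eq (Count [(c+3, NVar p)] (pow2F (c+3) c)) (NVar r))"

lemma holds_isPowF[simp]: "p < c \<Longrightarrow> r < c \<Longrightarrow> holds nv Y u (isPowF p r c) \<longleftrightarrow> nv p = 2 ^ nv r"
  unfolding isPowF_def isPow_char[symmetric] by (simp add: sum_ind_card)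

definition "sT B c = Count [(c, NVar 2), (c+1, UTerm), (c+2, NVar 1)]
  (Conj (YAtom (Plus (Times (NVar B) (NVar 2)) (NVar c)) (NVar (c+1)))
   (Conj (Lt (Plus (Times (NVar B) (NVar 2)) (NVar c)) UTerm)
    (ExB (c+3) (Plus (NVar 1) One) (Conj (isPowF (c+3) c (c+4)) (Lt (NVar (c+2)) (NVar (c+3)))))))"

definition "cf Y u j = (if j < u then card {i. i < u \<and> Y j i} else (0::nat))"
definition "sBf Y u L B = (\<Sum>r<L. cf Y u (B*L+r) * 2^r)"

lemma inner_z: assumes q: "q \<le> (W::nat)" and P: "\<And>z. P z \<longleftrightarrow> X \<and> z < q"
  shows "(\<Sum>z<W. if P z then 1 else 0::nat) = (if X then q else 0)"
proof (cases X)
  case True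
  then have e: "{z. z < W \<and> P z} = {..<q}" unfolding P using q by auto
  have "(\<Sum>z<W. if P z then 1 else 0::nat) = card {z. z < W \<and> P z}" by (rule sum_ind_card)
  then show ?thesis using True e by simp
next
  case False
  then have e: "{z. z < W \<and> P z} = {}" unfolding P by auto
  have "(\<Sum>z<W. if P z then 1 else 0::nat) = card {z. z < W \<and> P z}" by (rule sum_ind_card)
  then show ?thesis using False e by simp
qed

lemma sum_if_card: "(\<Sum>i<(u::nat). if A i then q else 0::nat) = card {i. i<u \<and> A i} * q"
proof -
  have "(\<Sum>i<u. if A i then q else 0) = (\<Sum>i<u. (if A i then 1 else 0) * q)" by (rule sum.cong) auto
  also have "\<dots> = card {i. i<u \<and> A i} * q" unfolding sum_distrib_right[symmetric] sum_ind_card by simp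
  finally show ?thesis .
qed

lemma sT_math: "(\<Sum>b<L. \<Sum>a<u. \<Sum>z<(2::nat)^L. if Y (B*L+b) a \<and> B*L+b < u \<and> 2^b < Suc (2^L) \<and> z < 2^b then 1 else 0) = sBf Y u L B"
  unfolding sBf_def
proof (rule sum.cong[OF refl])
  fix b assume "b \<in> {..<L}"
  then have bl: "(2::nat)^b \<le> 2^L" "(2::nat)^b < Suc (2^L)" by (auto simp: less_Suc_eq_le)
  have "(\<Sum>a<u. \<Sum>z<(2::nat)^L. if Y (B*L+b) a \<and> B*L+b < u \<and> 2^b < Suc (2^L) \<and> z < 2^b then 1 else 0)
      = (\<Sum>a<u. if Y (B*L+b) a \<and> B*L+b < u then (2::nat)^b else 0)"
    by (rule sum.cong[OF refl], rule inner_z[OF bl(1)]) (use bl in auto)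
  also have "\<dots> = cf Y u (B * L + b) * 2 ^ b"
    by (simp add: sum_if_card cf_def)
  finally show "(\<Sum>a<u. \<Sum>z<(2::nat)^L. if Y (B*L+b) a \<and> B*L+b < u \<and> 2^b < Suc (2^L) \<and> z < 2^b then 1 else 0)
      = cf Y u (B * L + b) * 2 ^ b" .
qed

lemma evalt_sT[simp]: "B < c \<Longrightarrow> 2 < c \<Longrightarrow> nv 1 = 2^(nv 2) \<Longrightarrow> evalt nv Y u (sT B c) = sBf Y u (nv 2) (nv B)"
  unfolding sT_def sT_math[symmetric] by simp

definition "VF B v c = ExB c (NVar 1) (ExB (c+1) (NVar 1) (Conj (Eq (sT B (c+10)) (Plus (Times (NVar (c+1)) (NVar 1)) (NVar c)))
  (ExB (c+2) (NVar 1) (Conj (Eq (NVar v) (Plus (NVar c) (NVar (c+2))))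
    (Or (Conj (Eq (NVar B) Zero) (Eq (NVar (c+2)) Zero))
        (ExB (c+3) (NVar B) (Conj (Eq (Plus (NVar (c+3)) One) (NVar B))
           (ExB (c+4) (NVar 1) (Eq (sT (c+3) (c+10)) (Plus (Times (NVar (c+2)) (NVar 1)) (NVar (c+4))))))))))))"

lemma VF_math:
  fixes s :: "nat \<Rightarrow> nat"
  assumes W: "0 < W" and sb: "\<And>b. s b < W*W"
  shows "(\<exists>a<W. \<exists>q<W. s B = q*W + a \<and> (\<exists>h<W. v = a + h \<and> (B = 0 \<and> h = 0 \<or> (\<exists>b<B. Suc b = B \<and> (\<exists>m<W. s b = h*W + m)))))
     \<longleftrightarrow> v = s B mod W + (if B = 0 then 0 else s (B-1) div W)"
proof
  assume "\<exists>a<W. \<exists>q<W. s B = q*W + a \<and> (\<exists>h<W. v = a + h \<and> (B = 0 \<and> h = 0 \<or> (\<exists>b<B. Suc b = B \<and> (\<exists>m<W. s b = h*W + m))))"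
  then obtain a q h where a: "a < W" "s B = q*W + a" and h: "h < W" "v = a + h"
    and c: "B = 0 \<and> h = 0 \<or> (\<exists>b<B. Suc b = B \<and> (\<exists>m<W. s b = h*W + m))" by blast
  have am: "a = s B mod W" using a by simp
  show "v = s B mod W + (if B = 0 then 0 else s (B-1) div W)"
  proof (cases "B = 0")
    case True then show ?thesis using c am h by auto
  next
    case False
    with c obtain m where "m < W" "s (B-1) = h*W + m" by auto
    then have "h = s (B-1) div W" by simp
    then show ?thesis using am h False by simp
  qed
next
  assume v: "v = s B mod W + (if B = 0 then 0 else s (B-1) div W)"
  define h where "h = (if B = 0 then 0 else s (B-1) div W)"
  have hW: "h < W" using sb W by (auto simp: h_def less_mult_imp_div_less)
  have "s B div W < W" using sb W by (simp add: less_mult_imp_div_less)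
  moreover have "s B = (s B div W)*W + s B mod W" by simp
  moreover have "B = 0 \<and> h = 0 \<or> (\<exists>b<B. Suc b = B \<and> (\<exists>m<W. s b = h*W + m))"
  proof (cases "B = 0")
    case True then show ?thesis by (simp add: h_def)
  next
    case False
    then have "Suc (B-1) = B" "B - 1 < B" "s (B-1) mod W < W" "s (B-1) = h*W + s (B-1) mod W" using W by (auto simp: h_def)
    then show ?thesis by blast
  qed
  moreover have "s B mod W < W" using W by simp
  moreover have "v = s B mod W + h" using v by (simp add: h_def)
  ultimately show "\<exists>a<W. \<exists>q<W. s B = q*W + a \<and> (\<exists>h<W. v = a + h \<and> (B = 0 \<and> h = 0 \<or> (\<exists>b<B. Suc b = B \<and> (\<exists>m<W. s b = h*W + m))))"
    using hW by blast
qed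

lemma sum_pow2_less: "(\<Sum>r<L. (2::nat)^r) < 2^L"
  by (induct L) auto

lemma cf_le: "cf Y u j \<le> u"
proof -
  have "card {i. i < u \<and> Y j i} \<le> card {..<u}" by (rule card_mono) auto
  then show ?thesis by (simp add: cf_def)
qed

lemma sBf_bound: "u < 2^L \<Longrightarrow> sBf Y u L B < 2^L * 2^L"
proof -
  assume u: "u < 2^L"
  have "sBf Y u L B \<le> (\<Sum>r<L. u * 2^r)" unfolding sBf_def
    by (rule sum_mono) (simp add: cf_le)
  also have "\<dots> = u * (\<Sum>r<L. 2^r)" by (simp add: sum_distrib_left)
  also have "\<dots> < 2^L * 2^L"
  proof (cases "u = 0")
    case True then show ?thesis by simp
  next
    case False
    then show ?thesis using u sum_pow2_less[of L] by (intro mult_strict_mono) auto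
  qed
  finally show ?thesis .
qed

definition "vBf Y u L B = sBf Y u L B mod 2^L + (if B = 0 then 0 else sBf Y u L (B-1) div 2^L)"

lemma holds_VF[simp]:
  assumes "B < c" "v < c" "2 < c" "nv 1 = 2^(nv 2)" "u < nv 1"
  shows "holds nv Y u (VF B v c) \<longleftrightarrow> nv v = vBf Y u (nv 2) (nv B)"
proof -
  have "holds nv Y u (VF B v c) \<longleftrightarrow> (\<exists>a<2^nv 2. \<exists>q<2^nv 2. sBf Y u (nv 2) (nv B) = q*2^nv 2 + a \<and> (\<exists>h<2^nv 2. nv v = a + h \<and> (nv B = 0 \<and> h = 0 \<or> (\<exists>b<nv B. Suc b = nv B \<and> (\<exists>m<2^nv 2. sBf Y u (nv 2) b = h*2^nv 2 + m)))))"
    unfolding VF_def using assms by simp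
  also have "\<dots> \<longleftrightarrow> nv v = sBf Y u (nv 2) (nv B) mod 2^nv 2 + (if nv B = 0 then 0 else sBf Y u (nv 2) (nv B - 1) div 2^nv 2)"
    by (rule VF_math) (use sBf_bound assms in auto)
  finally show ?thesis by (simp add: vBf_def)
qed

lemma vBf_bound: "u < 2^L \<Longrightarrow> vBf Y u L B + 1 < 2^L + 2^L"
proof -
  assume u: "u < 2^L"
  have "sBf Y u L (B-1) div 2^L < 2^L" using sBf_bound[OF u] by (simp add: less_mult_imp_div_less)
  then have "(if B = 0 then 0 else sBf Y u L (B-1) div 2^L) < 2^L" by simp
  moreover have "sBf Y u L B mod 2^L < 2^L" by simp
  ultimately show ?thesis unfolding vBf_def by linarith
qed

lemma vBf_bound'[simp]: "u < 2^L \<Longrightarrow> vBf Y u L B < 2^L + 2^L"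
  using vBf_bound[of u L Y B] by simp

definition "CinF B c = ExB c (NVar B) (Conj (ExB (c+1) (Plus (NVar 1) (NVar 1)) (Conj (VF c (c+1) (c+10)) (Le (NVar 1) (NVar (c+1)))))
  (AllB (c+2) (NVar B) (Imp (Lt (NVar c) (NVar (c+2))) (ExB (c+3) (Plus (NVar 1) (NVar 1)) (Conj (VF (c+2) (c+3) (c+10)) (Le (NVar 1) (Plus (NVar (c+3)) One)))))))"

definition "cinf Y u L B = (\<exists>b<B. 2^L \<le> vBf Y u L b \<and> (\<forall>b'<B. b < b' \<longrightarrow> 2^L \<le> vBf Y u L b' + 1))"

lemma holds_CinF[simp]: "B < c \<Longrightarrow> 2 < c \<Longrightarrow> nv 1 = 2^(nv 2) \<Longrightarrow> u < nv 1 \<Longrightarrow>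
  holds nv Y u (CinF B c) \<longleftrightarrow> cinf Y u (nv 2) (nv B)"
  unfolding CinF_def cinf_def by simp

lemma mod_ex: "0 < (W::nat) \<Longrightarrow> d < W \<Longrightarrow> (\<exists>q<x+1. x = q*W + d) \<longleftrightarrow> d = x mod W"
proof
  assume "0 < W" "d < W" "\<exists>q<x+1. x = q*W + d"
  then show "d = x mod W" by auto
next
  assume W: "0 < W" "d < W" and d: "d = x mod W"
  have "x div W \<le> x" by simp
  then have "x div W < x + 1" by linarith
  moreover have "x = (x div W) * W + d" using d by simp
  ultimately show "\<exists>q<x+1. x = q*W + d" by blast
qed

definition "DigitF B d c = ExB c (Plus (NVar 1)(NVar 1)) (Conj (VF B c (c+10))
   (Or (Conj (CinF B (c+40)) (ExB (c+1) (Plus (NVar c) Two) (Eq (Plus (NVar c) One) (Plus (Times (NVar (c+1)) (NVar 1)) (NVar d)))))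
       (Conj (Neg (CinF B (c+40))) (ExB (c+2) (Plus (NVar c) One) (Eq (NVar c) (Plus (Times (NVar (c+2)) (NVar 1)) (NVar d)))))))"

definition "digitf Y u L B = (vBf Y u L B + (if cinf Y u L B then 1 else 0)) mod 2^L"

lemma holds_DigitF[simp]:
  assumes "B < c" "d < c" "2 < c" "nv 1 = 2^(nv 2)" "u < nv 1" "nv d < nv 1"
  shows "holds nv Y u (DigitF B d c) \<longleftrightarrow> nv d = digitf Y u (nv 2) (nv B)"
proof -
  have "holds nv Y u (DigitF B d c) \<longleftrightarrow>
     (cinf Y u (nv 2) (nv B) \<and> (\<exists>q<vBf Y u (nv 2) (nv B) + 1 + 1. vBf Y u (nv 2) (nv B) + 1 = q * 2^nv 2 + nv d))
   \<or> (\<not> cinf Y u (nv 2) (nv B) \<and> (\<exists>q<vBf Y u (nv 2) (nv B) + 1. vBf Y u (nv 2) (nv B) = q * 2^nv 2 + nv d))"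
    unfolding DigitF_def using assms by (simp add: Two_def)
  also have "\<dots> \<longleftrightarrow> nv d = digitf Y u (nv 2) (nv B)"
    unfolding digitf_def using assms mod_ex[of "2^nv 2" "nv d" "vBf Y u (nv 2) (nv B) + 1"]
      mod_ex[of "2^nv 2" "nv d" "vBf Y u (nv 2) (nv B)"] by auto
  finally show ?thesis .
qed

definition "BitF n r c = ExB c (Plus (NVar 1) One) (Conj (isPowF c r (c+1)) (ExB (c+5) (Plus (NVar n) One)
   (ExB (c+6) (NVar c) (Eq (NVar n) (Plus (Times (Plus (Plus (NVar (c+5)) (NVar (c+5))) One) (NVar c)) (NVar (c+6)))))))"

lemma bit_ex: "0 < (P::nat) \<Longrightarrow> (\<exists>q<n+1. \<exists>m<P. n = (q+q+1)*P + m) \<longleftrightarrow> odd (n div P)"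
proof
  assume P: "0 < P" and "\<exists>q<n+1. \<exists>m<P. n = (q+q+1)*P + m"
  then obtain q m where qm: "m < P" "n = (q+q+1)*P + m" by blast
  then have "n div P = (m + (q+q+1)*P) div P" by (simp add: add.commute)
  also have "\<dots> = (q+q+1) + m div P" by (rule div_mult_self1) (use P in simp)
  also have "\<dots> = q+q+1" using qm(1) by simp
  finally have "n div P = q+q+1" .
  then show "odd (n div P)" by simp
next
  assume P: "0 < P" and o: "odd (n div P)"
  define q where "q = n div P div 2"
  have "n div P = q + q + 1" using odd_two_times_div_two_succ[OF o] unfolding q_def by simp
  then have "n = (q+q+1)*P + n mod P" by (metis div_mult_mod_eq)
  moreover have "q < n + 1"
  proof -
    have "n div P div 2 \<le> n div P" "n div P \<le> n" by simp_all
    then show ?thesis unfolding q_def by linarith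
  qed
  moreover have "n mod P < P" using P by simp
  ultimately show "\<exists>q<n+1. \<exists>m<P. n = (q+q+1)*P + m" by blast
qed

lemma holds_BitF[simp]:
  assumes "n < c" "r < c" "nv 1 = 2^(nv 2)" "nv r < nv 2"
  shows "holds nv Y u (BitF n r c) \<longleftrightarrow> bit (nv n) (nv r)"
proof -
  have "(2::nat) ^ nv r < 2 ^ nv 2" using assms by simp
  then have "(2::nat) ^ nv r < Suc (2 ^ nv 2)" by (rule less_SucI)
  then have "holds nv Y u (BitF n r c) \<longleftrightarrow> (\<exists>q<nv n+1. \<exists>m<2^nv r. nv n = (q+q+1)*2^nv r + m)"
    unfolding BitF_def using assms by simp
  also have "\<dots> \<longleftrightarrow> bit (nv n) (nv r)" using bit_ex[of "2^nv r" "nv n"] by (simp add: bit_iff_odd)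
  finally show ?thesis .
qed




lemma low_bits: "(\<Sum>i<m. if bit (n::nat) i then 2^i else 0) = n mod 2^m"
proof (induction m)
  case 0 then show ?case by simp
next
  case (Suc m)
  have "n mod 2^(Suc m) = 2^m * (n div 2^m mod 2) + n mod 2^m"
    using mod_mult2_eq[of n "2^m" 2] by (simp add: mult.commute)
  also have "2^m * (n div 2^m mod 2) = (if bit n m then 2^m else 0)"
    by (simp add: bit_iff_odd mod2_eq_if)
  finally show ?case using Suc by simp
qed

lemma bits_sum: "n < 2^m \<Longrightarrow> (\<Sum>i | i < m \<and> bit (n::nat) i. (2::nat)^i) = n"
proof -
  assume n: "n < 2^m"
  have "{i. i < m \<and> bit n i} = {i\<in>{..<m}. bit n i}" by auto
  then have "(\<Sum>i | i < m \<and> bit n i. (2::nat)^i) = (\<Sum>i\<in>{i\<in>{..<m}. bit n i}. 2^i)"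
    by simp
  also have "\<dots> = (\<Sum>i<m. if bit n i then 2^i else 0)"
    by (rule sum.inter_filter) simp
  also have "\<dots> = n" using low_bits n by simp
  finally show ?thesis .
qed

lemma reindex: fixes g :: "nat \<Rightarrow> nat" shows "(\<Sum>B<K. \<Sum>r<L. g (B*L+r)) = (\<Sum>j<K*L. g j)"
proof (induction K)
  case 0 then show ?case by simp
next
  case (Suc K)
  have "(\<Sum>j<Suc K*L. g j) = (\<Sum>j\<in>{0..<K*L}. g j) + (\<Sum>j\<in>{K*L..<L+K*L}. g j)"
    by (subst sum.atLeastLessThan_concat) (auto simp: atLeast0LessThan add.commute)
  also have "(\<Sum>j\<in>{K*L..<L+K*L}. g j) = (\<Sum>r\<in>{0..<L}. g (r + K*L))"
    using sum.shift_bounds_nat_ivl[of g 0 "K*L" L] by simp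
  finally show ?case using Suc by (simp add: atLeast0LessThan add.commute)
qed

definition "Ssum Y u = (\<Sum>i<u. YU Y u i)"

lemma S_cf: "Ssum Y u = (\<Sum>j<u. cf Y u j * 2^j)"
proof -
  have "YU Y u i = (\<Sum>j<u. if Y j i then 2^j else 0)" for i
  proof -
    have "{j. Y j i \<and> j < u} = {j\<in>{..<u}. Y j i}" by auto
    then have "YU Y u i = (\<Sum>j\<in>{j\<in>{..<u}. Y j i}. 2^j)" unfolding YU_def by simp
    also have "\<dots> = (\<Sum>j<u. if Y j i then 2^j else 0)" by (rule sum.inter_filter) simp
    finally show ?thesis .
  qed
  then have "Ssum Y u = (\<Sum>i<u. \<Sum>j<u. if Y j i then 2^j else 0)" by (simp add: Ssum_def)
  also have "\<dots> = (\<Sum>j<u. \<Sum>i<u. if Y j i then 2^j else 0)" by (rule sum.swap)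
  also have "\<dots> = (\<Sum>j<u. cf Y u j * 2^j)"
    by (rule sum.cong[OF refl]) (simp add: sum_if_card cf_def)
  finally show ?thesis .
qed

lemma cf_zero: "(u::nat) \<le> j \<Longrightarrow> cf Y u j = 0" unfolding cf_def by simp

lemma S_blocks: assumes "u \<le> K*L" shows "(\<Sum>B<K. sBf Y u L B * (2^L)^B) = Ssum Y u"
proof -
  have p: "(2::nat)^(B*L+r) = 2^r * (2^L)^B" for B r
  proof -
    have "(2::nat)^(B*L) = (2^L)^B" by (metis power_mult mult.commute)
    then show ?thesis by (simp add: power_add)
  qed
  have "sBf Y u L B * (2^L)^B = (\<Sum>r<L. cf Y u (B*L+r) * 2^(B*L+r))" for B
    unfolding sBf_def sum_distrib_right p by (simp add: mult.assoc)
  then have "(\<Sum>B<K. sBf Y u L B * (2^L)^B) = (\<Sum>B<K. \<Sum>r<L. cf Y u (B*L+r) * 2^(B*L+r))"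
    by simp
  also have "\<dots> = (\<Sum>j<K*L. cf Y u j * 2^j)" by (rule reindex)
  also have "\<dots> = (\<Sum>j<u. cf Y u j * 2^j)"
  proof -
    have "{..<K*L} = {..<u} \<union> {u..<K*L}" using assms by auto
    moreover have "(\<Sum>j\<in>{..<u} \<union> {u..<K*L}. cf Y u j * 2^j) = (\<Sum>j<u. cf Y u j * 2^j) + (\<Sum>j\<in>{u..<K*L}. cf Y u j * 2^j)"
      by (rule sum.union_disjoint) auto
    ultimately have "(\<Sum>j<K*L. cf Y u j * 2^j) = (\<Sum>j<u. cf Y u j * 2^j) + (\<Sum>j\<in>{u..<K*L}. cf Y u j * 2^j)"
      by simp
    then show ?thesis by (simp add: cf_zero)
  qed
  finally show ?thesis by (simp add: S_cf)
qed

lemma v_blocks: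
  fixes s :: "nat \<Rightarrow> nat" assumes sK: "s K = 0"
  shows "(\<Sum>B<Suc K. (s B mod W + (if B = 0 then 0 else s (B-1) div W)) * W^B) = (\<Sum>B<K. s B * W^B)"
proof -
  have "(\<Sum>B<Suc K. (s B mod W + (if B = 0 then 0 else s (B-1) div W)) * W^B)
     = (\<Sum>B<Suc K. s B mod W * W^B) + (\<Sum>B<Suc K. (if B = 0 then 0 else s (B-1) div W) * W^B)"
    by (simp add: sum.distrib distrib_right)
  also have "(\<Sum>B<Suc K. (if B = 0 then 0 else s (B-1) div W) * W^B) = (\<Sum>B<K. s B div W * W^(Suc B))"
    by (subst sum.lessThan_Suc_shift) simp
  also have "(\<Sum>B<Suc K. s B mod W * W^B) = (\<Sum>B<K. s B mod W * W^B)" using sK by simp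
  also have "(\<Sum>B<K. s B mod W * W^B) + (\<Sum>B<K. s B div W * W^(Suc B)) = (\<Sum>B<K. s B mod W * W^B + s B div W * W^(Suc B))"
    by (simp add: sum.distrib)
  also have "\<dots> = (\<Sum>B<K. s B * W^B)"
  proof (rule sum.cong[OF refl])
    fix B
    have "s B * W^B = (s B mod W + W * (s B div W)) * W^B" by simp
    also have "\<dots> = s B mod W * W^B + s B div W * W^(Suc B)" by (simp only: distrib_right distrib_left power_Suc mult_ac)
    finally show "s B mod W * W^B + s B div W * W^(Suc B) = s B * W^B" by simp
  qed
  finally show ?thesis .
qed

fun car :: "(nat \<Rightarrow> nat) \<Rightarrow> nat \<Rightarrow> nat \<Rightarrow> nat" where
  "car v W 0 = 0"
| "car v W (Suc B) = (v B + car v W B) div W"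

definition "cin v W B = (\<exists>b<B. W \<le> v b \<and> (\<forall>b'<B. b < b' \<longrightarrow> W \<le> v b' + 1))"

lemma cin_Suc: "cin v W (Suc B) \<longleftrightarrow> W \<le> v B \<or> (cin v W B \<and> W \<le> v B + 1)"
proof
  assume "cin v W (Suc B)"
  then obtain b where b: "b < Suc B" "W \<le> v b" "\<forall>b'<Suc B. b < b' \<longrightarrow> W \<le> v b' + 1"
    unfolding cin_def by blast
  show "W \<le> v B \<or> (cin v W B \<and> W \<le> v B + 1)"
  proof (cases "b = B")
    case True then show ?thesis using b by simp
  next
    case False
    then have "b < B" using b(1) by simp
    then have "cin v W B" using b unfolding cin_def by auto
    moreover have "W \<le> v B + 1" using b(3) \<open>b < B\<close> by simp
    ultimately show ?thesis by simp
  qed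
next
  assume a: "W \<le> v B \<or> (cin v W B \<and> W \<le> v B + 1)"
  show "cin v W (Suc B)"
  proof (cases "W \<le> v B")
    case True
    then show ?thesis unfolding cin_def by (intro exI[of _ B]) auto
  next
    case False
    with a have c: "cin v W B" "W \<le> v B + 1" by auto
    then obtain b where b: "b < B" "W \<le> v b" "\<forall>b'<B. b < b' \<longrightarrow> W \<le> v b' + 1"
      unfolding cin_def by blast
    have "\<forall>b'<Suc B. b < b' \<longrightarrow> W \<le> v b' + 1"
    proof (intro allI impI)
      fix b' assume "b' < Suc B" "b < b'"
      then show "W \<le> v b' + 1" using b(3) c(2) by (cases "b' = B") auto
    qed
    then show ?thesis unfolding cin_def using b by (intro exI[of _ b]) auto
  qed
qed

lemma car_cin:
  assumes W: "0 < W" and vb: "\<And>b. v b + 1 < W + W"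
  shows "car v W B = (if cin v W B then 1 else 0)"
proof (induction B)
  case 0 then show ?case by (simp add: cin_def)
next
  case (Suc B)
  have c01: "car v W B \<le> 1" using Suc by simp
  have lt: "v B + car v W B < W + W" using vb[of B] c01 by linarith
  show ?case
  proof (cases "W \<le> v B + car v W B")
    case True
    then have "(v B + car v W B) div W = 1" using lt W
      by (intro div_nat_eqI) auto
    moreover have "cin v W (Suc B)"
    proof (cases "cin v W B")
      case True then show ?thesis using Suc \<open>W \<le> v B + car v W B\<close> cin_Suc[of v W B] by simp
    next
      case False then show ?thesis using Suc \<open>W \<le> v B + car v W B\<close> cin_Suc[of v W B] by simp
    qed
    ultimately show ?thesis by simp
  next
    case False
    then have "(v B + car v W B) div W = 0" by simp
    moreover have "\<not> cin v W (Suc B)"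
    proof (cases "cin v W B")
      case True then show ?thesis using Suc False cin_Suc[of v W B] by simp
    next
      case F: False then show ?thesis using Suc False cin_Suc[of v W B] by simp
    qed
    ultimately show ?thesis by simp
  qed
qed

definition "NN v W K = (\<Sum>j<K. v j * W^j)"

lemma NN_step: assumes "NN v W B div W^B = car v W B" "0 < W"
  shows "NN v W (Suc B) div W^B = car v W B + v B"
proof -
  have "NN v W (Suc B) = NN v W B mod W^B + (car v W B + v B) * W^B"
    using assms(1) div_mult_mod_eq[of "NN v W B" "W^B"] by (simp add: NN_def algebra_simps)
  moreover have "NN v W B mod W^B < W^B" using assms(2) by simp
  ultimately show ?thesis using assms(2) by simp
qed

lemma NN_car: assumes "0 < W" shows "NN v W B div W^B = car v W B"
proof (induction B)
  case 0 then show ?case by (simp add: NN_def)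
next
  case (Suc B)
  have "NN v W (Suc B) div W^(Suc B) = NN v W (Suc B) div W^B div W"
    unfolding power_Suc2 div_mult2_eq ..
  also have "\<dots> = (car v W B + v B) div W" using NN_step[OF Suc assms] by simp
  finally show ?case by (simp add: add.commute)
qed

lemma NN_digit: assumes W: "0 < W" and BK: "B < K"
  shows "NN v W K div W^B mod W = (v B + car v W B) mod W"
  using BK
proof (induction K)
  case 0 then show ?case by simp
next
  case (Suc K)
  show ?case
  proof (cases "B = K")
    case True
    then show ?thesis using NN_step[OF NN_car[OF W] W, of v B] by (simp add: add.commute)
  next
    case False
    then have BK: "B < K" using Suc.prems by simp
    obtain j where j: "K = j + 1 + B" using BK by (metis add.commute add_Suc less_iff_Suc_add plus_1_eq_Suc)
    have "NN v W (Suc K) = NN v W K + (W * (v K * W^j)) * W^B"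
      by (simp add: NN_def j power_add mult_ac)
    then have "NN v W (Suc K) div W^B = (W * (v K * W^j)) + NN v W K div W^B"
      using W by simp
    then have "NN v W (Suc K) div W^B mod W = NN v W K div W^B mod W" by simp
    then show ?thesis using Suc.IH BK by simp
  qed
qed

lemma bit_block: assumes "r < L" shows "bit (S::nat) (B*L + r) \<longleftrightarrow> bit (S div (2^L)^B mod 2^L) r"
proof -
  have "((2::nat)^L)^B = 2^(B*L)" by (simp add: power_mult[symmetric] mult.commute)
  then have "bit (S div (2^L)^B mod 2^L) r \<longleftrightarrow> bit (S div 2^(B*L)) r"
    using assms by (simp add: take_bit_eq_mod[symmetric] bit_take_bit_iff)
  also have "\<dots> \<longleftrightarrow> bit S (B*L + r)" by (simp add: bit_iff_odd div_exp_eq)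
  finally show ?thesis by simp
qed

lemma cinf_cin: "cinf Y u L B = cin (vBf Y u L) (2^L) B"
  unfolding cinf_def cin_def ..

lemma main_math:
  assumes L: "0 < L" and u: "u < 2^L"
  shows "bit (Ssum Y u) k \<longleftrightarrow> bit (digitf Y u L (k div L)) (k mod L)"
proof -
  define W :: nat where "W = 2^L"
  define B where "B = k div L"
  define K where "K = B + u + 1"
  have W0: "0 < W" unfolding W_def by simp
  have s0: "sBf Y u L K = 0" unfolding sBf_def
  proof (rule sum.neutral, intro ballI)
    fix r assume "r \<in> {..<L}"
    have "K \<le> K * L" using L by simp
    then have "u \<le> K*L + r" unfolding K_def by linarith
    then show "cf Y u (K*L+r) * 2^r = 0" by (simp add: cf_zero)
  qed
  have "NN (vBf Y u L) W (Suc K) = (\<Sum>B<K. sBf Y u L B * W^B)"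
    unfolding NN_def vBf_def W_def by (rule v_blocks[where s="sBf Y u L", OF s0])
  also have "\<dots> = Ssum Y u" unfolding W_def
  proof (rule S_blocks)
    have "K \<le> K * L" using L by simp
    then show "u \<le> K * L" unfolding K_def by linarith
  qed
  finally have N: "NN (vBf Y u L) W (Suc K) = Ssum Y u" .
  have vb: "vBf Y u L b + 1 < W + W" for b using vBf_bound[OF u] unfolding W_def by simp
  have "Ssum Y u div W^B mod W = (vBf Y u L B + car (vBf Y u L) W B) mod W"
    using NN_digit[OF W0, of B "Suc K" "vBf Y u L"] N unfolding K_def by simp
  also have "\<dots> = digitf Y u L B"
    using car_cin[where v="vBf Y u L" and W=W and B=B, OF W0 vb] unfolding digitf_def cinf_cin W_def by simp
  finally have D: "Ssum Y u div W^B mod W = digitf Y u L B" .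
  have "k = B*L + k mod L" unfolding B_def by simp
  then have "bit (Ssum Y u) k \<longleftrightarrow> bit (Ssum Y u div (2^L)^B mod 2^L) (k mod L)"
    using bit_block[of "k mod L" L "Ssum Y u" B] L by simp
  then show ?thesis using D unfolding W_def B_def by simp
qed



definition "PhiIn = ExB 4 (Plus (NVar 0) One) (ExB 5 (NVar 2) (Conj (Eq (NVar 0) (Plus (Times (NVar 4) (NVar 2)) (NVar 5)))
   (ExB 6 (NVar 1) (Conj (DigitF 4 6 100) (BitF 6 5 300)))))"

lemma holds_PhiIn:
  assumes "nv 1 = 2^(nv 2)" "u < nv 1" "0 < nv 2"
  shows "holds nv Y u PhiIn \<longleftrightarrow> bit (Ssum Y u) (nv 0)"
proof -
  have "holds nv Y u PhiIn \<longleftrightarrow> (\<exists>b<Suc (nv 0). \<exists>ba<nv 2. nv 0 = b * nv 2 + ba \<and>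
      digitf Y u (nv 2) b < 2 ^ nv 2 \<and> bit (digitf Y u (nv 2) b) ba)"
    unfolding PhiIn_def using assms(1,2) by (simp cong: conj_cong)
  also have "\<dots> \<longleftrightarrow> bit (digitf Y u (nv 2) (nv 0 div nv 2)) (nv 0 mod nv 2)"
  proof
    assume "\<exists>b<Suc (nv 0). \<exists>ba<nv 2. nv 0 = b * nv 2 + ba \<and>
      digitf Y u (nv 2) b < 2 ^ nv 2 \<and> bit (digitf Y u (nv 2) b) ba"
    then obtain b ba where h: "ba < nv 2" "nv 0 = b * nv 2 + ba" "bit (digitf Y u (nv 2) b) ba" by blast
    then have "nv 0 div nv 2 = b" "nv 0 mod nv 2 = ba" by simp_all
    then show "bit (digitf Y u (nv 2) (nv 0 div nv 2)) (nv 0 mod nv 2)" using h by simp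
  next
    assume h: "bit (digitf Y u (nv 2) (nv 0 div nv 2)) (nv 0 mod nv 2)"
    have "nv 0 div nv 2 < Suc (nv 0)" by (simp add: le_imp_less_Suc)
    moreover have "nv 0 mod nv 2 < nv 2" using assms(3) by simp
    moreover have "nv 0 = (nv 0 div nv 2) * nv 2 + nv 0 mod nv 2" by simp
    moreover have "digitf Y u (nv 2) (nv 0 div nv 2) < 2 ^ nv 2" by (simp add: digitf_def)
    ultimately show "\<exists>b<Suc (nv 0). \<exists>ba<nv 2. nv 0 = b * nv 2 + ba \<and>
      digitf Y u (nv 2) b < 2 ^ nv 2 \<and> bit (digitf Y u (nv 2) b) ba" using h by blast
  qed
  also have "\<dots> \<longleftrightarrow> bit (Ssum Y u) (nv 0)" using main_math[of "nv 2" u Y "nv 0"] assms by simp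
  finally show ?thesis .
qed

definition "Phi = ExB 1 (Plus (Plus UTerm UTerm) One) (Conj (pow2F 1 10) (Conj (Lt UTerm (NVar 1))
   (ExB 2 (NVar 1) (Conj (Eq (Count [(3, NVar 1)] (pow2F 3 10)) (NVar 2)) PhiIn))))"

lemma holds_Phi:
  assumes u0: "0 < u"
  shows "holds nv Y u Phi \<longleftrightarrow> bit (Ssum Y u) (nv 0)"
proof -
  have raw: "holds nv Y u Phi \<longleftrightarrow> (\<exists>b<Suc (u + u). is_pow2 b \<and> u < b \<and>
         card {ba. ba < b \<and> is_pow2 ba} < b \<and>
         holds (nv(Suc 0 := b, 2 := card {ba. ba < b \<and> is_pow2 ba})) Y u PhiIn)"
    unfolding Phi_def by (simp add: sum_ind_card)
  have key: "(card {ba. ba < b \<and> is_pow2 ba} < b \<and>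
         holds (nv(Suc 0 := b, 2 := card {ba. ba < b \<and> is_pow2 ba})) Y u PhiIn) \<longleftrightarrow> bit (Ssum Y u) (nv 0)"
    if b: "is_pow2 b" "u < b" for b
  proof -
    obtain i where i: "b = 2^i" using b(1) by (auto simp: is_pow2_def)
    have c: "card {ba. ba < b \<and> is_pow2 ba} = i" using i card_pow2_below by simp
    have "i < b" using i by simp
    moreover have "0 < i" using i b(2) u0 by (cases i) auto
    moreover have "holds (nv(Suc 0 := b, 2 := i)) Y u PhiIn \<longleftrightarrow> bit (Ssum Y u) (nv 0)"
      using holds_PhiIn[of "nv(Suc 0 := b, 2 := i)" u Y] i b(2) \<open>0 < i\<close> by simp
    ultimately show ?thesis using c by simp
  qed
  obtain n where n: "2^n \<le> u" "u < 2^(n+1)" using ex_power_ivl1[of 2 u] u0 by auto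
  have p2: "is_pow2 (2^(n+1))" unfolding is_pow2_def by blast
  have ex: "2^(n+1) < Suc (u+u) \<and> is_pow2 (2^(n+1)) \<and> u < 2^(n+1)"
    using n p2 by simp
  show ?thesis unfolding raw
  proof
    assume "\<exists>b<Suc (u + u). is_pow2 b \<and> u < b \<and>
         card {ba. ba < b \<and> is_pow2 ba} < b \<and>
         holds (nv(Suc 0 := b, 2 := card {ba. ba < b \<and> is_pow2 ba})) Y u PhiIn"
    then show "bit (Ssum Y u) (nv 0)" using key by blast
  next
    assume "bit (Ssum Y u) (nv 0)"
    then show "\<exists>b<Suc (u + u). is_pow2 b \<and> u < b \<and>
         card {ba. ba < b \<and> is_pow2 ba} < b \<and>
         holds (nv(Suc 0 := b, 2 := card {ba. ba < b \<and> is_pow2 ba})) Y u PhiIn"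
      using key[of "2^(n+1)"] ex by blast
  qed
qed

lemma Ssum_bound: "Ssum Y u < 2^(u+u)"
proof (cases "u = 0")
  case True then show ?thesis by (simp add: Ssum_def)
next
  case False
  have "Ssum Y u \<le> (\<Sum>j<u. u * 2^j)" unfolding S_cf
    by (rule sum_mono) (simp add: cf_le)
  also have "\<dots> = u * (\<Sum>j<u. 2^j)" by (simp add: sum_distrib_left)
  also have "\<dots> < 2^u * 2^u"
    using False sum_pow2_less[of u] by (intro mult_strict_mono) auto
  finally show ?thesis by (simp add: power_add)
qed

theorem lemma3p10:
  shows "\<exists>(sitadd :: aform) (bd :: aterm). \<forall>nv Y u.
           bitval nv Y u sitadd bd = (\<Sum>i < u. YU Y u i)"
proof (intro exI allI)
  fix nv Y u
  show "bitval nv Y u Phi (Plus UTerm UTerm) = (\<Sum>i < u. YU Y u i)"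
  proof (cases "u = 0")
    case True then show ?thesis by (simp add: bitval_def)
  next
    case False
    have "bitval nv Y u Phi (Plus UTerm UTerm) = (\<Sum>i | i < u + u \<and> bit (Ssum Y u) i. (2::nat)^i)"
      unfolding bitval_def yhat_def using holds_Phi[of u _ Y] False by simp
    also have "\<dots> = Ssum Y u" by (rule bits_sum[OF Ssum_bound])
    finally show ?thesis by (simp add: Ssum_def)
  qed
qed

end
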